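(* Let $d\ge1$, $N\ge2$, let $a:\mathbb{Z}^d\to\mathbb{R}$ define a symmetric, spatially homogeneous, irreducible random walk satisfying condition (F) or condition (HT), let $x_1,\dots,x_N\in\mathbb{Z}^d$ be distinct, and let $\mathscr{H}_\beta=\mathscr{A}+\beta\sum_{i=1}^N\delta_{x_i}\delta_{x_i}^T$ with $\beta>\beta_c$. Let $\lambda_0(\beta)$ be the largest positive eigenvalue of $\mathscr{H}_\beta$. Then every other positive eigenvalue of $\mathscr{H}_\beta$ (i.e. each of $\lambda_1(\beta),\dots,\lambda_{N-1}(\beta)$) has multiplicity at most $N-1$.
   Context: $a$ satisfies $a(0)<0$, $a(z)\ge0$ for $z\ne0$, $a(z)=a(-z)$, $\sum_z a(z)=0$, and irreducibility (every $z\in\mathbb{Z}^d$ is a finite sum of vectors $z_i$ with $a(z_i)\ne0$). $(\mathscr{A}u)(x)=\sum_{x'}a(x-x')u(x')$ on $l^2(\mathbb{Z}^d)$; $\delta_x$ is the indicator vector of $x$. Condition (F): $\sum_z|z|^2a(z)<\infty$. Condition (HT): $a(z)\sim H(z/|z|)|z|^{-(d+\alpha)}$ as $|z|\to\infty$ for some $\alpha\in(0,2)$ and some continuous positive symmetric function $H$ on $\mathbb{S}^{d-1}$. $\beta_c$ is the minimal value of $\beta$ such that the spectrum of $\mathscr{H}_\beta$ contains positive eigenvalues for all $\beta>\beta_c$ sufficiently close to $\beta_c$. The positive eigenvalues of $\mathscr{H}_\beta$ listed with multiplicity are denoted $\lambda_0(\beta)>\lambda_1(\beta)\ge\dots\ge\lambda_{N-1}(\beta)>0$.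 *)

theory Defs
  imports "HOL-Analysis.Analysis"
begin

text \<open>Lattice points of Z^d are modelled as int ^ 'd (d = CARD('d) >= 1);
  real embedding used for Euclidean norms.\<close>

definition realv :: "int ^ 'd \<Rightarrow> real ^ 'd" where
  "realv z = (\<chi> i. real_of_int (z $ i))"

definition is_rw_kernel :: "(int ^ 'd \<Rightarrow> real) \<Rightarrow> bool" where
  "is_rw_kernel a \<longleftrightarrow>
     a 0 < 0 \<and> (\<forall>z. z \<noteq> 0 \<longrightarrow> a z \<ge> 0) \<and> (\<forall>z. a z = a (- z)) \<and>
     (a has_sum 0) UNIV \<and>
     (\<forall>z. \<exists>zs. (\<forall>w\<in>set zs. a w \<noteq> 0) \<and> z = sum_list zs)"

definition cond_F :: "(int ^ 'd \<Rightarrow> real) \<Rightarrow> bool" where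
  "cond_F a \<longleftrightarrow> (\<lambda>z. (norm (realv z))^2 * a z) summable_on UNIV"

definition cond_HT :: "(int ^ 'd \<Rightarrow> real) \<Rightarrow> bool" where
  "cond_HT a \<longleftrightarrow> (\<exists>(\<alpha>::real) (H :: real ^ 'd \<Rightarrow> real).
     0 < \<alpha> \<and> \<alpha> < 2 \<and> continuous_on (sphere 0 1) H \<and>
     (\<forall>w\<in>sphere 0 1. H w > 0 \<and> H (- w) = H w) \<and>
     (\<forall>\<epsilon>>0. \<exists>R. \<forall>z. norm (realv z) > R \<longrightarrow>
        \<bar>a z / (H (realv z /\<^sub>R norm (realv z)) *
                 norm (realv z) powr (- (real CARD('d) + \<alpha>))) - 1\<bar> < \<epsilon>))"

definition l2 :: "(int ^ 'd \<Rightarrow> real) \<Rightarrow> bool" where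
  "l2 u \<longleftrightarrow> (\<lambda>x. (u x)^2) summable_on UNIV"

definition opA :: "(int ^ 'd \<Rightarrow> real) \<Rightarrow> (int ^ 'd \<Rightarrow> real) \<Rightarrow> int ^ 'd \<Rightarrow> real" where
  "opA a u x = (\<Sum>\<^sub>\<infinity>x'. a (x - x') * u x')"

definition opH :: "(int ^ 'd \<Rightarrow> real) \<Rightarrow> real \<Rightarrow> nat \<Rightarrow> (nat \<Rightarrow> int ^ 'd)
                   \<Rightarrow> (int ^ 'd \<Rightarrow> real) \<Rightarrow> int ^ 'd \<Rightarrow> real" where
  "opH a \<beta> N xs u x = opA a u x + \<beta> * (\<Sum>i<N. (if x = xs i then u (xs i) else 0))"

definition eigenspace_H :: "(int ^ 'd \<Rightarrow> real) \<Rightarrow> real \<Rightarrow> nat \<Rightarrow> (nat \<Rightarrow> int ^ 'd)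
                   \<Rightarrow> real \<Rightarrow> (int ^ 'd \<Rightarrow> real) set" where
  "eigenspace_H a \<beta> N xs lam = {u. l2 u \<and> opH a \<beta> N xs u = (\<lambda>x. lam * u x)}"

definition is_eigenvalue_H :: "(int ^ 'd \<Rightarrow> real) \<Rightarrow> real \<Rightarrow> nat \<Rightarrow> (nat \<Rightarrow> int ^ 'd)
                   \<Rightarrow> real \<Rightarrow> bool" where
  "is_eigenvalue_H a \<beta> N xs lam \<longleftrightarrow> (\<exists>u\<in>eigenspace_H a \<beta> N xs lam. u \<noteq> (\<lambda>x. 0))"

definition beta_c :: "(int ^ 'd \<Rightarrow> real) \<Rightarrow> nat \<Rightarrow> (nat \<Rightarrow> int ^ 'd) \<Rightarrow> real" where
  "beta_c a N xs = Inf {b. \<exists>\<epsilon>>0. \<forall>\<beta>. b < \<beta> \<and> \<beta> < b + \<epsilon> \<longrightarrow>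
                         (\<exists>lam>0. is_eigenvalue_H a \<beta> N xs lam)}"

definition lin_indep :: "('a \<Rightarrow> real) set \<Rightarrow> bool" where
  "lin_indep S \<longleftrightarrow> (\<forall>c. (\<forall>x. (\<Sum>v\<in>S. c v * v x) = 0) \<longrightarrow> (\<forall>v\<in>S. c v = 0))"

definition mult_le :: "(int ^ 'd \<Rightarrow> real) \<Rightarrow> real \<Rightarrow> nat \<Rightarrow> (nat \<Rightarrow> int ^ 'd)
                   \<Rightarrow> real \<Rightarrow> nat \<Rightarrow> bool" where
  "mult_le a \<beta> N xs lam m \<longleftrightarrow>
     (\<forall>S. finite S \<and> S \<subseteq> eigenspace_H a \<beta> N xs lam \<and> lin_indep S \<longrightarrow> card S \<le> m)"

end

theory Submission imports Defs begin

lemma sum_real_abs: "(f::'a\<Rightarrow>real) summable_on A \<Longrightarrow> (\<lambda>x. \<bar>f x\<bar>) summable_on A"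
  using summable_on_iff_abs_summable_on_real by auto

lemma amgm: "\<bar>x*y\<bar> \<le> (1/2)*x^2 + (1/2)*(y::real)^2"
proof -
  have "0 \<le> (\<bar>x\<bar> - \<bar>y\<bar>)^2" by simp
  moreover have "(\<bar>x\<bar> - \<bar>y\<bar>)^2 = x^2 - 2*\<bar>x*y\<bar> + y^2" by (simp add: power2_diff abs_mult)
  ultimately show ?thesis by linarith
qed

lemma abs_le_sq: "\<bar>x\<bar> \<le> 1 + (x::real)^2"
proof -
  have "0 \<le> (\<bar>x\<bar> - 1)^2" by simp
  moreover have "(\<bar>x\<bar> - 1)^2 = x^2 - 2*\<bar>x\<bar> + 1" by (simp add: power2_diff)
  ultimately show ?thesis by linarith
qed

lemma comp_test:
  fixes f g :: "'a \<Rightarrow> real"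
  assumes "g summable_on A" "\<And>x. x\<in>A \<Longrightarrow> \<bar>f x\<bar> \<le> g x"
  shows "f summable_on A"
proof -
  have "(\<lambda>x. norm (g x)) summable_on A" using assms(1) summable_on_iff_abs_summable_on_real by blast
  then have "(\<lambda>x. norm (f x)) summable_on A"
    by (rule Infinite_Sum.abs_summable_on_comparison_test) (use assms(2) in force)
  then show ?thesis using summable_on_iff_abs_summable_on_real by blast
qed

lemma infsum_diff_r:
  fixes f g :: "'a \<Rightarrow> real"
  assumes "f summable_on A" "g summable_on A"
  shows "infsum (\<lambda>x. f x - g x) A = infsum f A - infsum g A"
proof -
  have "infsum (\<lambda>x. f x + (- g x)) A = infsum f A + infsum (\<lambda>x. - g x) A"
    by (rule infsum_add) (use assms summable_on_uminus in auto)
  then show ?thesis by (simp add: infsum_uminus)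
qed

lemma summable_diff_r:
  fixes f g :: "'a \<Rightarrow> real"
  assumes "f summable_on A" "g summable_on A"
  shows "(\<lambda>x. f x - g x) summable_on A"
proof -
  have "(\<lambda>x. f x + (- g x)) summable_on A"
    by (rule summable_on_add) (use assms summable_on_uminus in auto)
  then show ?thesis by simp
qed

lemma sum_summable_r:
  fixes f :: "'i \<Rightarrow> 'a \<Rightarrow> real"
  assumes "finite I" "\<And>i. i \<in> I \<Longrightarrow> f i summable_on A"
  shows "(\<lambda>x. \<Sum>i\<in>I. f i x) summable_on A \<and> infsum (\<lambda>x. \<Sum>i\<in>I. f i x) A = (\<Sum>i\<in>I. infsum (f i) A)"
  using assms
proof (induction I rule: finite_induct)
  case empty then show ?case by simp
next
  case (insert j I)
  then have h: "(\<lambda>x. \<Sum>i\<in>I. f i x) summable_on A" "infsum (\<lambda>x. \<Sum>i\<in>I. f i x) A = (\<Sum>i\<in>I. infsum (f i) A)"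
    "f j summable_on A" by auto
  show ?case using insert.hyps h summable_on_add[OF h(3) h(1)] infsum_add[OF h(3) h(1)] by simp
qed

lemma infsum_delta:
  "infsum (\<lambda>x. if x = c then (k::real) else 0) UNIV = k"
proof -
  have "infsum (\<lambda>x. if x = c then (k::real) else 0) UNIV = infsum (\<lambda>x. if x = c then (k::real) else 0) {c}"
    by (rule infsum_cong_neutral) auto
  then show ?thesis by simp
qed

lemma summable_delta:
  "(\<lambda>x. if x = c then (k::real) else 0) summable_on UNIV"
proof -
  have "((\<lambda>x. if x = c then (k::real) else 0) has_sum k) {c}" using has_sum_finite[of "{c}" "\<lambda>x. if x = c then (k::real) else 0"] by simp
  then have "((\<lambda>x. if x = c then (k::real) else 0) has_sum k) UNIV"
    by (subst has_sum_cong_neutral[where T="{c}"]) auto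
  then show ?thesis by (auto simp: summable_on_def)
qed

lemma shift_bij: "bij_betw (\<lambda>x::'z::ab_group_add. x - z) UNIV UNIV"
  by (rule bij_betwI[where g="\<lambda>x. x + z"]) auto

lemma shift_bij2: "bij_betw (\<lambda>x::'z::ab_group_add. z - x) UNIV UNIV"
  by (rule bij_betwI[where g="\<lambda>x. z - x"]) auto

lemma neg_bij: "bij_betw (\<lambda>x::'z::ab_group_add. - x) UNIV UNIV"
  by (rule bij_betwI[where g="\<lambda>x. - x"]) auto

lemma shift_summable:
  fixes f :: "'z::ab_group_add \<Rightarrow> real"
  shows "(\<lambda>x. f (x - z)) summable_on UNIV \<longleftrightarrow> f summable_on UNIV"
  using summable_on_reindex_bij_betw[OF shift_bij, of f z] .

lemma shift_infsum:
  fixes f :: "'z::ab_group_add \<Rightarrow> real"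
  shows "infsum (\<lambda>x. f (x - z)) UNIV = infsum f UNIV"
  using infsum_reindex_bij_betw[OF shift_bij, of f z] .

lemma l2_prod:
  assumes "l2 u" "l2 v"
  shows "(\<lambda>x. u x * v x) summable_on UNIV"
proof (rule comp_test)
  show "(\<lambda>x. (1/2)*(u x)^2 + (1/2)*(v x)^2) summable_on UNIV"
    using assms unfolding l2_def
    by (intro summable_on_add summable_on_cmult_right) auto
  show "\<bar>u x * v x\<bar> \<le> (1/2)*(u x)^2 + (1/2)*(v x)^2" for x
    by (rule amgm)
qed

lemma l2_shift: "l2 u \<Longrightarrow> l2 (\<lambda>x. u (x - z))"
  unfolding l2_def using shift_summable[of "\<lambda>x. (u x)^2" z] by simp

lemma l2_lin:
  assumes "l2 u" "l2 v"
  shows "l2 (\<lambda>x. p * u x + q * v x)"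
  unfolding l2_def
proof (rule comp_test)
  show "(\<lambda>x. 2*p^2*(u x)^2 + 2*q^2*(v x)^2) summable_on UNIV"
    using assms unfolding l2_def
    by (intro summable_on_add summable_on_cmult_right) auto
  show "\<bar>(p * u x + q * v x)^2\<bar> \<le> 2*p^2*(u x)^2 + 2*q^2*(v x)^2" for x
  proof -
    have "0 \<le> (p * u x - q * v x)^2" by simp
    moreover have "(p * u x + q * v x)^2 + (p * u x - q * v x)^2 = 2*p^2*(u x)^2 + 2*q^2*(v x)^2" by algebra
    moreover have "\<bar>(p * u x + q * v x)^2\<bar> = (p * u x + q * v x)^2" by simp
    ultimately show ?thesis by linarith
  qed
qed

lemma l2_bound:
  assumes "l2 u"
  shows "\<bar>u y\<bar> \<le> 1 + infsum (\<lambda>x. (u x)^2) UNIV"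
proof -
  have "sum (\<lambda>x. (u x)^2) {y} \<le> infsum (\<lambda>x. (u x)^2) UNIV"
    by (rule finite_sum_le_infsum) (use assms[unfolded l2_def] in auto)
  moreover have "\<bar>u y\<bar> \<le> 1 + (u y)^2"
    by (rule abs_le_sq)
  ultimately show ?thesis by simp
qed


lemma lin2:
  fixes f g :: "'a \<Rightarrow> real"
  assumes "f summable_on A" "g summable_on A"
  shows "infsum (\<lambda>x. p * f x + q * g x) A = p * infsum f A + q * infsum g A"
    and "(\<lambda>x. p * f x + q * g x) summable_on A"
proof -
  have s1: "(\<lambda>x. p * f x) summable_on A" "(\<lambda>x. q * g x) summable_on A"
    using assms by (auto intro: summable_on_cmult_right)
  show "infsum (\<lambda>x. p * f x + q * g x) A = p * infsum f A + q * infsum g A"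
    using infsum_add[OF s1] by (simp add: infsum_cmult_right')
  show "(\<lambda>x. p * f x + q * g x) summable_on A" using summable_on_add[OF s1] .
qed

lemma kernel_summable:
  assumes "is_rw_kernel a"
  shows "a summable_on UNIV" "infsum a UNIV = 0"
  using assms unfolding is_rw_kernel_def by (auto simp: summable_on_def infsumI)

lemma kernel_abs_summable:
  assumes "is_rw_kernel a"
  shows "(\<lambda>z. \<bar>a z\<bar>) summable_on UNIV"
  using sum_real_abs[OF kernel_summable(1)[OF assms]] .

lemma opA_section:
  fixes a :: "int ^ 'd \<Rightarrow> real"
  assumes "is_rw_kernel a" "l2 u"
  shows "(\<lambda>x'. a (x - x') * u x') summable_on UNIV"
proof (rule comp_test)
  let ?M = "1 + infsum (\<lambda>x. (u x)^2) UNIV"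
  have "(\<lambda>z. \<bar>a z\<bar> * ?M) summable_on UNIV"
    using kernel_abs_summable[OF assms(1)] by (rule summable_on_cmult_left)
  then show "(\<lambda>x'. \<bar>a (x - x')\<bar> * ?M) summable_on UNIV"
    using summable_on_reindex_bij_betw[OF shift_bij2, of "\<lambda>z. \<bar>a z\<bar> * ?M" x] by simp
  show "\<bar>a (x - x') * u x'\<bar> \<le> \<bar>a (x - x')\<bar> * ?M" for x'
    using l2_bound[OF assms(2), of x'] by (simp add: abs_mult mult_left_mono)
qed

lemma opA_lin:
  fixes a :: "int ^ 'd \<Rightarrow> real"
  assumes "is_rw_kernel a" "l2 u" "l2 v"
  shows "opA a (\<lambda>y. p * u y + q * v y) x = p * opA a u x + q * opA a v x"
proof -
  have "opA a (\<lambda>y. p * u y + q * v y) x = (\<Sum>\<^sub>\<infinity>x'. p * (a (x - x') * u x') + q * (a (x - x') * v x'))"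
    unfolding opA_def by (rule infsum_cong) (simp add: algebra_simps)
  also have "\<dots> = p * opA a u x + q * opA a v x"
    unfolding opA_def by (rule lin2(1)) (use opA_section assms in auto)
  finally show ?thesis .
qed

definition Cf :: "(int ^ 'd \<Rightarrow> real) \<Rightarrow> (int ^ 'd \<Rightarrow> real) \<Rightarrow> int ^ 'd \<Rightarrow> real" where
  "Cf u v z = (\<Sum>\<^sub>\<infinity>x. u (x - z) * v x)"

lemma Cf_bound:
  assumes "l2 u" "l2 v"
  shows "(\<Sum>\<^sub>\<infinity>x. \<bar>u (x - z) * v x\<bar>) \<le> (1/2) * infsum (\<lambda>x. (u x)^2) UNIV + (1/2) * infsum (\<lambda>x. (v x)^2) UNIV"
    and "\<bar>Cf u v z\<bar> \<le> (1/2) * infsum (\<lambda>x. (u x)^2) UNIV + (1/2) * infsum (\<lambda>x. (v x)^2) UNIV"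
    and "(\<lambda>x. \<bar>u (x - z) * v x\<bar>) summable_on UNIV"
proof -
  have us: "(\<lambda>x. (u (x - z))^2) summable_on UNIV" "(\<lambda>x. (v x)^2) summable_on UNIV"
    using l2_shift[OF assms(1)] assms(2) unfolding l2_def by auto
  have ps: "(\<lambda>x. u (x - z) * v x) summable_on UNIV"
    using l2_prod[OF l2_shift[OF assms(1)] assms(2)] .
  show ab: "(\<lambda>x. \<bar>u (x - z) * v x\<bar>) summable_on UNIV" using sum_real_abs[OF ps] .
  have "(\<Sum>\<^sub>\<infinity>x. \<bar>u (x - z) * v x\<bar>) \<le> (\<Sum>\<^sub>\<infinity>x. (1/2) * (u (x - z))^2 + (1/2) * (v x)^2)"
  proof (rule infsum_mono[OF ab lin2(2)[OF us]])
    show "\<bar>u (x - z) * v x\<bar> \<le> (1/2) * (u (x - z))^2 + (1/2) * (v x)^2" for x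
      by (rule amgm)
  qed
  also have "\<dots> = (1/2) * infsum (\<lambda>x. (u x)^2) UNIV + (1/2) * infsum (\<lambda>x. (v x)^2) UNIV"
    using lin2(1)[OF us, of "1/2" "1/2"] shift_infsum[of "\<lambda>x. (u x)^2" z] by simp
  finally show b: "(\<Sum>\<^sub>\<infinity>x. \<bar>u (x - z) * v x\<bar>) \<le> (1/2) * infsum (\<lambda>x. (u x)^2) UNIV + (1/2) * infsum (\<lambda>x. (v x)^2) UNIV" .
  have "\<bar>Cf u v z\<bar> \<le> (\<Sum>\<^sub>\<infinity>x. \<bar>u (x - z) * v x\<bar>)"
    unfolding Cf_def using norm_infsum_bound[of "\<lambda>x. u (x - z) * v x" UNIV] ab by simp
  then show "\<bar>Cf u v z\<bar> \<le> (1/2) * infsum (\<lambda>x. (u x)^2) UNIV + (1/2) * infsum (\<lambda>x. (v x)^2) UNIV"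
    using b by linarith
qed

lemma fubini:
  fixes a :: "int ^ 'd \<Rightarrow> real"
  assumes ker: "is_rw_kernel a" and lu: "l2 u" and lv: "l2 v"
  shows "(\<lambda>z. a z * Cf u v z) summable_on UNIV"
    and "infsum (\<lambda>x. opA a u x * v x) UNIV = infsum (\<lambda>z. a z * Cf u v z) UNIV"
proof -
  define K where "K = (1/2) * infsum (\<lambda>x. (u x)^2) UNIV + (1/2) * infsum (\<lambda>x. (v x)^2) UNIV"
  have aK: "(\<lambda>z. \<bar>a z\<bar> * K) summable_on UNIV"
    using kernel_abs_summable[OF ker] by (rule summable_on_cmult_left)
  show sumC: "(\<lambda>z. a z * Cf u v z) summable_on UNIV"
  proof (rule comp_test[OF aK])
    show "\<bar>a z * Cf u v z\<bar> \<le> \<bar>a z\<bar> * K" for z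
      using Cf_bound(2)[OF lu lv, of z] unfolding K_def by (simp add: abs_mult mult_left_mono)
  qed
  define F where "F = (\<lambda>(z::int^'d, x::int^'d). a z * (u (x - z) * v x))"
  have secs: "(\<lambda>x. F (z, x)) summable_on UNIV" for z
    unfolding F_def using l2_prod[OF l2_shift[OF lu] lv] by (auto intro: summable_on_cmult_right)
  have "(\<lambda>p. norm (F p)) summable_on (Sigma UNIV (\<lambda>_. UNIV))"
  proof (subst Infinite_Sum.abs_summable_on_Sigma_iff, intro conjI ballI)
    show "(\<lambda>y. norm (F (z, y))) summable_on UNIV" for z
      using sum_real_abs[OF secs[of z]] by simp
    show "(\<lambda>z. norm (\<Sum>\<^sub>\<infinity>y. norm (F (z, y)))) summable_on UNIV"
    proof (rule comp_test[OF aK])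
      fix z
      have "(\<Sum>\<^sub>\<infinity>y. norm (F (z, y))) = (\<Sum>\<^sub>\<infinity>y. \<bar>a z\<bar> * \<bar>u (y - z) * v y\<bar>)"
        unfolding F_def by (simp add: abs_mult)
      also have "\<dots> = \<bar>a z\<bar> * (\<Sum>\<^sub>\<infinity>y. \<bar>u (y - z) * v y\<bar>)"
        by (simp add: infsum_cmult_right')
      also have "\<dots> \<le> \<bar>a z\<bar> * K"
        using Cf_bound(1)[OF lu lv, of z] unfolding K_def by (simp add: mult_left_mono)
      finally have "(\<Sum>\<^sub>\<infinity>y. norm (F (z, y))) \<le> \<bar>a z\<bar> * K" .
      moreover have "0 \<le> (\<Sum>\<^sub>\<infinity>y. norm (F (z, y)))" by (rule infsum_nonneg) simp
      ultimately show "\<bar>norm (\<Sum>\<^sub>\<infinity>y. norm (F (z, y)))\<bar> \<le> \<bar>a z\<bar> * K" by simp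
    qed
  qed
  then have Fs: "F summable_on (UNIV \<times> UNIV)"
    using summable_on_iff_abs_summable_on_real by auto
  have Fs': "(\<lambda>(z, x). a z * (u (x - z) * v x)) summable_on (UNIV \<times> UNIV)"
    using Fs unfolding F_def .
  have swap: "(\<Sum>\<^sub>\<infinity>z. \<Sum>\<^sub>\<infinity>x. a z * (u (x - z) * v x)) = (\<Sum>\<^sub>\<infinity>x. \<Sum>\<^sub>\<infinity>z. a z * (u (x - z) * v x))"
    using infsum_swap_banach[OF Fs'] .
  have l: "(\<Sum>\<^sub>\<infinity>x. a z * (u (x - z) * v x)) = a z * Cf u v z" for z
    unfolding Cf_def by (simp add: infsum_cmult_right')
  have r: "(\<Sum>\<^sub>\<infinity>z. a z * (u (x - z) * v x)) = opA a u x * v x" for x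
  proof -
    have "(\<Sum>\<^sub>\<infinity>z. a z * (u (x - z) * v x)) = (\<Sum>\<^sub>\<infinity>z. a z * u (x - z)) * v x"
      by (simp add: infsum_cmult_left'[symmetric] mult.assoc)
    also have "(\<Sum>\<^sub>\<infinity>z. a z * u (x - z)) = opA a u x"
      unfolding opA_def using infsum_reindex_bij_betw[OF shift_bij2, of "\<lambda>x'. a (x - x') * u x'" x] by simp
    finally show ?thesis .
  qed
  show "infsum (\<lambda>x. opA a u x * v x) UNIV = infsum (\<lambda>z. a z * Cf u v z) UNIV"
    using swap l r by simp
qed

lemma Cf_sym: "Cf u v z = Cf v u (- z)"
  unfolding Cf_def using infsum_reindex_bij_betw[OF shift_bij, of "\<lambda>y. v (y - - z) * u y" z]
  by (simp add: mult.commute)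

lemma B_sym:
  fixes a :: "int ^ 'd \<Rightarrow> real"
  assumes ker: "is_rw_kernel a" and lu: "l2 u" and lv: "l2 v"
  shows "infsum (\<lambda>x. opA a u x * v x) UNIV = infsum (\<lambda>x. opA a v x * u x) UNIV"
proof -
  have asym: "a (- z) = a z" for z using ker unfolding is_rw_kernel_def by metis
  have "infsum (\<lambda>x. opA a u x * v x) UNIV = infsum (\<lambda>z. a z * Cf u v z) UNIV"
    using fubini(2)[OF ker lu lv] .
  also have "\<dots> = infsum (\<lambda>z. a (- z) * Cf v u (- z)) UNIV"
    by (simp add: asym Cf_sym[of u v])
  also have "\<dots> = infsum (\<lambda>z. a z * Cf v u z) UNIV"
    using infsum_reindex_bij_betw[OF neg_bij, of "\<lambda>z. a z * Cf v u z"] by simp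
  also have "\<dots> = infsum (\<lambda>x. opA a v x * u x) UNIV"
    using fubini(2)[OF ker lv lu] by simp
  finally show ?thesis .
qed

lemma B_neg:
  fixes a :: "int ^ 'd \<Rightarrow> real"
  assumes ker: "is_rw_kernel a" and lu: "l2 u"
  shows "infsum (\<lambda>x. opA a u x * u x) UNIV \<le> 0"
proof -
  have C0: "Cf u u z \<le> Cf u u 0" for z
  proof -
    have "Cf u u z \<le> \<bar>Cf u u z\<bar>" by simp
    also have "\<dots> \<le> (1/2) * infsum (\<lambda>x. (u x)^2) UNIV + (1/2) * infsum (\<lambda>x. (u x)^2) UNIV"
      by (rule Cf_bound(2)[OF lu lu])
    also have "\<dots> = Cf u u 0" unfolding Cf_def by (simp add: power2_eq_square)
    finally show ?thesis .
  qed
  have "infsum (\<lambda>x. opA a u x * u x) UNIV = infsum (\<lambda>z. a z * Cf u u z) UNIV"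
    using fubini(2)[OF ker lu lu] .
  also have "\<dots> \<le> infsum (\<lambda>z. a z * Cf u u 0) UNIV"
  proof (rule infsum_mono)
    show "(\<lambda>z. a z * Cf u u z) summable_on UNIV" using fubini(1)[OF ker lu lu] .
    show "(\<lambda>z. a z * Cf u u 0) summable_on UNIV"
      using kernel_summable(1)[OF ker] by (rule summable_on_cmult_left)
    show "a z * Cf u u z \<le> a z * Cf u u 0" for z
    proof (cases "z = 0")
      case False
      then have "a z \<ge> 0" using ker unfolding is_rw_kernel_def by blast
      then show ?thesis using C0[of z] by (simp add: mult_left_mono)
    qed simp
  qed
  also have "\<dots> = 0" using kernel_summable(2)[OF ker] by (simp add: infsum_cmult_left')
  finally show ?thesis .
qed

definition Gf :: "nat \<Rightarrow> (nat \<Rightarrow> int ^ 'd) \<Rightarrow> (int ^ 'd \<Rightarrow> real) \<Rightarrow> int ^ 'd \<Rightarrow> real" where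
  "Gf N xs u x = (\<Sum>i<N. (if x = xs i then u (xs i) else 0))"

lemma G_inner:
  shows "(\<lambda>x. Gf N xs u x * w x) summable_on UNIV"
    and "infsum (\<lambda>x. Gf N xs u x * w x) UNIV = (\<Sum>i<N. u (xs i) * w (xs i))"
proof -
  have eq: "(\<lambda>x. Gf N xs u x * w x) = (\<lambda>x. \<Sum>i<N. (if x = xs i then u (xs i) * w (xs i) else 0))"
    unfolding Gf_def by (auto simp: sum_distrib_right intro!: sum.cong)
  have h: "(\<lambda>x. \<Sum>i<N. (if x = xs i then u (xs i) * w (xs i) else 0)) summable_on UNIV \<and>
     infsum (\<lambda>x. \<Sum>i<N. (if x = xs i then u (xs i) * w (xs i) else 0)) UNIV
       = (\<Sum>i<N. infsum (\<lambda>x. if x = xs i then u (xs i) * w (xs i) else 0) UNIV)"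
    by (rule sum_summable_r) (auto intro: summable_delta)
  show "(\<lambda>x. Gf N xs u x * w x) summable_on UNIV" using h eq by simp
  show "infsum (\<lambda>x. Gf N xs u x * w x) UNIV = (\<Sum>i<N. u (xs i) * w (xs i))"
    using h eq by (simp add: infsum_delta)
qed

lemma eigD:
  assumes "u \<in> eigenspace_H a \<beta> N xs lam"
  shows "l2 u" "opA a u x = lam * u x - \<beta> * Gf N xs u x"
proof -
  show "l2 u" using assms unfolding eigenspace_H_def by auto
  have "opH a \<beta> N xs u x = lam * u x" using assms unfolding eigenspace_H_def by (auto dest: fun_cong)
  then show "opA a u x = lam * u x - \<beta> * Gf N xs u x" unfolding opH_def Gf_def by simp
qed

lemma B_eig:
  fixes a :: "int ^ 'd \<Rightarrow> real"
  assumes "u \<in> eigenspace_H a \<beta> N xs lam" "l2 w"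
  shows "infsum (\<lambda>x. opA a u x * w x) UNIV
         = lam * infsum (\<lambda>x. u x * w x) UNIV - \<beta> * (\<Sum>i<N. u (xs i) * w (xs i))"
proof -
  have lu: "l2 u" using eigD(1)[OF assms(1)] .
  have "infsum (\<lambda>x. opA a u x * w x) UNIV = infsum (\<lambda>x. lam * (u x * w x) + (-\<beta>) * (Gf N xs u x * w x)) UNIV"
    by (intro infsum_cong) (simp add: eigD(2)[OF assms(1)] algebra_simps)
  also have "\<dots> = lam * infsum (\<lambda>x. u x * w x) UNIV + (-\<beta>) * infsum (\<lambda>x. Gf N xs u x * w x) UNIV"
    by (rule lin2(1)) (use l2_prod[OF lu assms(2)] G_inner(1) in auto)
  also have "infsum (\<lambda>x. Gf N xs u x * w x) UNIV = (\<Sum>i<N. u (xs i) * w (xs i))"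
    by (rule G_inner(2))
  finally show ?thesis by simp
qed

lemma l2_sq_zero:
  assumes "l2 u" "infsum (\<lambda>x. u x * u x) UNIV \<le> 0"
  shows "u = (\<lambda>x. 0)"
proof
  fix x
  have "u x * u x = 0"
    by (rule nonneg_infsum_le_0D[OF assms(2)]) (use l2_prod[OF assms(1) assms(1)] in auto)
  then show "u x = 0" by simp
qed

lemma key:
  fixes a :: "int ^ 'd \<Rightarrow> real"
  assumes ker: "is_rw_kernel a" and pos: "0 < lam" "0 < mu" "lam \<noteq> mu"
    and eu: "u \<in> eigenspace_H a \<beta> N xs lam" and ev: "v \<in> eigenspace_H a \<beta> N xs mu"
    and same: "\<forall>i<N. u (xs i) = v (xs i)"
  shows "u = (\<lambda>x. 0) \<and> v = (\<lambda>x. 0)"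
proof -
  have lu: "l2 u" and lv: "l2 v" using eigD(1)[OF eu] eigD(1)[OF ev] by auto
  define I :: "(int^'d \<Rightarrow> real) \<Rightarrow> (int^'d \<Rightarrow> real) \<Rightarrow> real" where "I = (\<lambda>f g. infsum (\<lambda>x. f x * g x) UNIV)"
  define P where "P = (\<Sum>i<N. u (xs i) * v (xs i))"
  have Guv: "Gf N xs u = Gf N xs v" unfolding Gf_def using same by (auto intro!: ext sum.cong)
  have Ivu: "I v u = I u v" unfolding I_def by (simp add: mult.commute)
  have b1: "infsum (\<lambda>x. opA a u x * v x) UNIV = lam * I u v - \<beta> * P"
    using B_eig[OF eu lv] unfolding I_def P_def .
  have b2: "infsum (\<lambda>x. opA a v x * u x) UNIV = mu * I u v - \<beta> * P"
    using B_eig[OF ev lu] Ivu same unfolding I_def P_def by (simp add: mult.commute)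
  have "lam * I u v - \<beta> * P = mu * I u v - \<beta> * P"
    using B_sym[OF ker lu lv] b1 b2 by simp
  then have "(lam - mu) * I u v = 0" by (simp add: algebra_simps)
  then have Iuv: "I u v = 0" using pos by simp
  define w where "w = (\<lambda>x. 1 * u x + (-1) * v x)"
  have lw: "l2 w" unfolding w_def by (rule l2_lin[OF lu lv])
  have Aw: "opA a w x = lam * u x - mu * v x" for x
    unfolding w_def using opA_lin[OF ker lu lv, of 1 "-1" x] eigD(2)[OF eu, of x] eigD(2)[OF ev, of x] Guv
    by simp
  have s_uu: "(\<lambda>x. u x * u x) summable_on UNIV" and s_uv: "(\<lambda>x. u x * v x) summable_on UNIV"
    and s_vu: "(\<lambda>x. v x * u x) summable_on UNIV" and s_vv: "(\<lambda>x. v x * v x) summable_on UNIV"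
    using l2_prod lu lv by auto
  have e1: "infsum (\<lambda>x. 1 * (u x * u x) + (-1) * (u x * v x)) UNIV = I u u - I u v"
    using lin2(1)[OF s_uu s_uv, of 1 "-1"] unfolding I_def by simp
  have e2: "infsum (\<lambda>x. 1 * (v x * u x) + (-1) * (v x * v x)) UNIV = I v u - I v v"
    using lin2(1)[OF s_vu s_vv, of 1 "-1"] unfolding I_def by simp
  have "infsum (\<lambda>x. opA a w x * w x) UNIV
        = infsum (\<lambda>x. lam * (1 * (u x * u x) + (-1) * (u x * v x)) + (-mu) * (1 * (v x * u x) + (-1) * (v x * v x))) UNIV"
  proof (intro infsum_cong)
    fix x
    have "w x = u x - v x" unfolding w_def by simp
    then show "opA a w x * w x = lam * (1 * (u x * u x) + (-1) * (u x * v x)) + (-mu) * (1 * (v x * u x) + (-1) * (v x * v x))"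
      unfolding Aw by (simp only:) (simp add: algebra_simps)
  qed
  also have "\<dots> = lam * (I u u - I u v) + (-mu) * (I v u - I v v)"
  proof -
    have s1: "(\<lambda>x. 1 * (u x * u x) + (-1) * (u x * v x)) summable_on UNIV" by (rule lin2(2)[OF s_uu s_uv])
    have s2: "(\<lambda>x. 1 * (v x * u x) + (-1) * (v x * v x)) summable_on UNIV" by (rule lin2(2)[OF s_vu s_vv])
    show ?thesis using lin2(1)[OF s1 s2, of lam "-mu"] e1 e2 by (simp only:)
  qed
  also have "\<dots> = lam * I u u + mu * I v v" using Iuv Ivu by simp
  finally have "lam * I u u + mu * I v v \<le> 0" using B_neg[OF ker lw] by simp
  moreover have "0 \<le> I u u" "0 \<le> I v v" unfolding I_def by (auto intro: infsum_nonneg)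
  ultimately have "I u u \<le> 0" "I v v \<le> 0" using pos
    by (smt (verit) mult_pos_pos mult_nonneg_nonneg zero_less_mult_iff)+
  then show ?thesis using l2_sq_zero lu lv unfolding I_def by auto
qed

lemma eig_lin:
  fixes a :: "int ^ 'd \<Rightarrow> real"
  assumes ker: "is_rw_kernel a" and eu: "u \<in> eigenspace_H a \<beta> N xs lam" and ew: "w \<in> eigenspace_H a \<beta> N xs lam"
  shows "(\<lambda>x. p * u x + q * w x) \<in> eigenspace_H a \<beta> N xs lam"
proof -
  have lu: "l2 u" and lw: "l2 w" using eigD(1)[OF eu] eigD(1)[OF ew] by auto
  have "opH a \<beta> N xs (\<lambda>x. p * u x + q * w x) y = lam * (p * u y + q * w y)" for y
  proof -
    have "opH a \<beta> N xs (\<lambda>x. p * u x + q * w x) y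
       = p * opA a u y + q * opA a w y + \<beta> * (p * Gf N xs u y + q * Gf N xs w y)"
    proof -
      have g: "(\<Sum>i<N. if y = xs i then p * u (xs i) + q * w (xs i) else 0) = p * Gf N xs u y + q * Gf N xs w y"
        unfolding Gf_def sum_distrib_left sum.distrib[symmetric] by (rule sum.cong) auto
      show ?thesis unfolding opH_def opA_lin[OF ker lu lw] g by simp
    qed
    also have "\<dots> = lam * (p * u y + q * w y)"
      unfolding eigD(2)[OF eu, of y] eigD(2)[OF ew, of y] by (simp add: algebra_simps)
    finally show ?thesis .
  qed
  then show ?thesis unfolding eigenspace_H_def using l2_lin[OF lu lw] by auto
qed

lemma eig_zero:
  "(\<lambda>x. 0) \<in> eigenspace_H a \<beta> N xs lam"
  unfolding eigenspace_H_def l2_def opH_def opA_def by auto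

lemma eig_sum:
  fixes a :: "int ^ 'd \<Rightarrow> real"
  assumes ker: "is_rw_kernel a" and "finite T" "T \<subseteq> eigenspace_H a \<beta> N xs lam"
  shows "(\<lambda>x. \<Sum>s\<in>T. c s * s x) \<in> eigenspace_H a \<beta> N xs lam"
  using assms(2,3)
proof (induction T rule: finite_induct)
  case empty then show ?case using eig_zero by simp
next
  case (insert t T)
  then have "(\<lambda>x. c t * t x + 1 * (\<Sum>s\<in>T. c s * s x)) \<in> eigenspace_H a \<beta> N xs lam"
    by (intro eig_lin[OF ker]) auto
  then show ?case using insert.hyps by simp
qed

lemma dep:
  fixes f :: "'a \<Rightarrow> nat \<Rightarrow> real"
  assumes "finite J" "card J > N"
  shows "\<exists>c. (\<exists>j\<in>J. c j \<noteq> 0) \<and> (\<forall>i<N. (\<Sum>j\<in>J. c j * f j i) = 0)"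
  using assms
proof (induction N arbitrary: J f)
  case 0
  then obtain j0 where "j0 \<in> J" by fastforce
  then show ?case by (intro exI[where x="\<lambda>j. if j = j0 then 1 else 0"]) auto
next
  case (Suc n)
  show ?case
  proof (cases "\<forall>j\<in>J. f j n = 0")
    case True
    obtain c where c: "\<exists>j\<in>J. c j \<noteq> 0" "\<forall>i<n. (\<Sum>j\<in>J. c j * f j i) = 0"
      using Suc.IH[of J f] Suc.prems by auto
    have "\<forall>i<Suc n. (\<Sum>j\<in>J. c j * f j i) = 0"
    proof (intro allI impI)
      fix i assume "i < Suc n"
      then consider "i < n" | "i = n" by linarith
      then show "(\<Sum>j\<in>J. c j * f j i) = 0"
        by cases (use c True in auto)
    qed
    then show ?thesis using c by blast
  next
    case False
    then obtain j0 where j0: "j0 \<in> J" "f j0 n \<noteq> 0" by blast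
    define J' where "J' = J - {j0}"
    define f' where "f' = (\<lambda>j i. f j i - (f j n / f j0 n) * f j0 i)"
    have fJ': "finite J'" and "card J' > n" using Suc.prems j0 unfolding J'_def by auto
    then obtain d where d: "\<exists>j\<in>J'. d j \<noteq> 0" "\<forall>i<n. (\<Sum>j\<in>J'. d j * f' j i) = 0"
      using Suc.IH[of J' f'] by blast
    define c where "c = (\<lambda>j. if j = j0 then - (\<Sum>j\<in>J'. d j * f j n) / f j0 n else d j)"
    have J: "J = insert j0 J'" "j0 \<notin> J'" using j0 unfolding J'_def by auto
    have eq: "(\<Sum>j\<in>J. c j * f j i) = (\<Sum>j\<in>J'. d j * f' j i)" for i
    proof -
      have "(\<Sum>j\<in>J. c j * f j i) = c j0 * f j0 i + (\<Sum>j\<in>J'. c j * f j i)"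
        unfolding J(1) using sum.insert[OF fJ' J(2)] by simp
      also have "(\<Sum>j\<in>J'. c j * f j i) = (\<Sum>j\<in>J'. d j * f j i)"
        unfolding c_def using J by (intro sum.cong) auto
      also have "(\<Sum>j\<in>J'. d j * f' j i) = (\<Sum>j\<in>J'. d j * f j i) - (\<Sum>j\<in>J'. d j * f j n) / f j0 n * f j0 i"
        unfolding f'_def by (simp add: algebra_simps sum_subtractf sum_distrib_left sum_distrib_right sum_divide_distrib)
      ultimately show ?thesis unfolding c_def by simp
    qed
    have "\<forall>i<Suc n. (\<Sum>j\<in>J. c j * f j i) = 0"
    proof (intro allI impI)
      fix i assume "i < Suc n"
      then consider "i < n" | "i = n" by linarith
      then show "(\<Sum>j\<in>J. c j * f j i) = 0"
      proof cases
        case 1 then show ?thesis using eq d by simp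
      next
        case 2 then show ?thesis unfolding eq f'_def using j0 by simp
      qed
    qed
    moreover have "\<exists>j\<in>J. c j \<noteq> 0" using d J unfolding c_def by force
    ultimately show ?thesis by blast
  qed
qed

theorem corollary1:
  fixes a :: "int ^ 'd \<Rightarrow> real" and N :: nat and xs :: "nat \<Rightarrow> int ^ 'd"
    and \<beta> :: real and lam :: real
  assumes "N \<ge> 2"
    and "is_rw_kernel a"
    and "cond_F a \<or> cond_HT a"
    and "inj_on xs {..<N}"
    and "\<beta> > beta_c a N xs"
    and "lam > 0" and "is_eigenvalue_H a \<beta> N xs lam"
    and "\<exists>\<mu>. \<mu> > lam \<and> is_eigenvalue_H a \<beta> N xs \<mu>"
  shows "mult_le a \<beta> N xs lam (N - 1)"
  unfolding mult_le_def
proof (intro allI impI)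
  fix S assume H: "finite S \<and> S \<subseteq> eigenspace_H a \<beta> N xs lam \<and> lin_indep S"
  then have fS: "finite S" and SE: "S \<subseteq> eigenspace_H a \<beta> N xs lam" and li: "lin_indep S" by auto
  have ker: "is_rw_kernel a" and lam: "lam > 0" using assms by auto
  obtain mu v where mu: "mu > lam" and ev: "v \<in> eigenspace_H a \<beta> N xs mu" and vnz: "v \<noteq> (\<lambda>x. 0)"
    using assms(8) unfolding is_eigenvalue_H_def by blast
  show "card S \<le> N - 1"
  proof (rule ccontr)
    assume "\<not> card S \<le> N - 1"
    then have cS: "card S \<ge> N" using assms(1) by linarith
    define J where "J = insert None (Some ` S)"
    have fJ: "finite J" unfolding J_def using fS by simp
    have "card J = Suc (card S)" unfolding J_def using fS by (simp add: card_image)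
    then have cJ: "card J > N" using cS by simp
    define f where "f = (\<lambda>j i. case j of None \<Rightarrow> v (xs i) | Some s \<Rightarrow> s (xs i))"
    obtain c where c1: "\<exists>j\<in>J. c j \<noteq> 0" and c2: "\<forall>i<N. (\<Sum>j\<in>J. c j * f j i) = 0"
      using dep[OF fJ cJ, of f] by blast
    have split: "(\<Sum>j\<in>J. c j * f j i) = c None * v (xs i) + (\<Sum>s\<in>S. c (Some s) * s (xs i))" for i
    proof -
      have "(\<Sum>j\<in>J. c j * f j i) = c None * f None i + (\<Sum>j\<in>Some ` S. c j * f j i)"
        unfolding J_def using fS by (subst sum.insert) auto
      also have "(\<Sum>j\<in>Some ` S. c j * f j i) = (\<Sum>s\<in>S. c (Some s) * s (xs i))"
        by (subst sum.reindex) (auto simp: f_def)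
      finally show ?thesis by (simp add: f_def)
    qed
    show False
    proof (cases "c None = 0")
      case True
      define u where "u = (\<lambda>x. \<Sum>s\<in>S. c (Some s) * s x)"
      have eu: "u \<in> eigenspace_H a \<beta> N xs lam" unfolding u_def by (rule eig_sum[OF ker fS SE])
      have "\<forall>i<N. u (xs i) = (\<lambda>x. 0::real) (xs i)"
        using c2 split True unfolding u_def by simp
      then have "u = (\<lambda>x. 0)"
        using key[OF ker lam _ _ eu eig_zero, of "lam + 1"] lam by auto
      then have "\<forall>x. (\<Sum>s\<in>S. c (Some s) * s x) = 0" unfolding u_def by (metis)
      then have "\<forall>s\<in>S. c (Some s) = 0"
        using li[unfolded lin_indep_def, rule_format, of "\<lambda>s. c (Some s)"] by blast
      then show False using c1 True unfolding J_def by auto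
    next
      case False
      define u where "u = (\<lambda>x. \<Sum>s\<in>S. (- c (Some s) / c None) * s x)"
      have eu: "u \<in> eigenspace_H a \<beta> N xs lam" unfolding u_def by (rule eig_sum[OF ker fS SE])
      have "u (xs i) = v (xs i)" if "i < N" for i
      proof -
        have "c None * v (xs i) + (\<Sum>s\<in>S. c (Some s) * s (xs i)) = 0" using c2 split that by simp
        moreover have "u (xs i) = - (\<Sum>s\<in>S. c (Some s) * s (xs i)) / c None"
          unfolding u_def by (simp add: sum_divide_distrib sum_negf)
        ultimately have "c None * u (xs i) = c None * v (xs i)" using False by (simp add: field_simps)
        then show ?thesis using False by simp
      qed
      then have "v = (\<lambda>x. 0)"
        using key[OF ker lam _ _ eu ev] lam mu by auto
      then show False using vnz by simp
    qed
  qed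
qed

end
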